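(* Let $n\ge2$, $F\in GL^+(n)$, $\mu>0$, $\mu_c\ge0$. (i) If $\mu=\mu_c$, then $R\in SO(n)$ is a critical point of $\widetilde W_{\mu,\mu_c}(\cdot;F)$ if and only if $FR^T=RF^T$. (ii) If $\mu\ne\mu_c$, then $R\in SO(n)$ is a critical point of $\widetilde W_{\mu,\mu_c}(\cdot;F)$ if and only if $R$ is a critical point of $\widetilde W_{1,0}(\cdot;\widehat F_{\mu,\mu_c})$, which holds if and only if $$\widehat F_{\mu,\mu_c}R^T\widehat F_{\mu,\mu_c}R^T-R\widehat F_{\mu,\mu_c}^TR\widehat F_{\mu,\mu_c}^T=2\big(\widehat F_{\mu,\mu_c}R^T-R\widehat F_{\mu,\mu_c}^T\big).$$
   Context: $\mathrm{sym}(Y)=\tfrac12(Y+Y^T)$, $\mathrm{skew}(Y)=\tfrac12(Y-Y^T)$, $\|Y\|^2=\mathrm{tr}(Y^TY)$. For $F\in GL^+(n)$, $\mu>0$, $\mu_c\ge0$: $\widetilde W_{\mu,\mu_c}(R;F)=\mu\|\mathrm{sym}(R^TF-\mathbb I_n)\|^2+\mu_c\|\mathrm{skew}(R^TF-\mathbb I_n)\|^2$ on $SO(n)$; for any invertible $G$, $\widetilde W_{1,0}(R;G)=\|\mathrm{sym}(R^TG-\mathbb I_n)\|^2$. $\widehat F_{\mu,\mu_c}=\frac{\mu-\mu_c}{\mu}F$. Critical points are those of the restriction to the submanifold $SO(n)\subset\mathcal M_{n\times n}(\mathbb R)$. *)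

theory Defs
  imports "HOL-Analysis.Analysis"
begin

definition msym :: "real^'n^'n \<Rightarrow> real^'n^'n" where
  "msym Y = (1/2) *\<^sub>R (Y + transpose Y)"

definition mskew :: "real^'n^'n \<Rightarrow> real^'n^'n" where
  "mskew Y = (1/2) *\<^sub>R (Y - transpose Y)"

definition frob2 :: "real^'n^'n \<Rightarrow> real" where
  "frob2 Y = trace (transpose Y ** Y)"

definition SOn :: "(real^'n^'n) set" where
  "SOn = {R. orthogonal_matrix R \<and> det R = 1}"

definition Wt :: "real \<Rightarrow> real \<Rightarrow> real^'n^'n \<Rightarrow> real^'n^'n \<Rightarrow> real" where
  "Wt mu muc F R = mu * frob2 (msym (transpose R ** F - mat 1))
                 + muc * frob2 (mskew (transpose R ** F - mat 1))"

definition Fhat :: "real \<Rightarrow> real \<Rightarrow> real^'n^'n \<Rightarrow> real^'n^'n" where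
  "Fhat mu muc F = ((mu - muc) / mu) *\<^sub>R F"

text \<open>R is a critical point of the restriction of f to the submanifold SO(n):
  R lies in SO(n) and the derivative of f along every differentiable curve in
  SO(n) through R (i.e. along every tangent vector of SO(n) at R) vanishes.\<close>
definition crit_SO :: "(real^'n^'n \<Rightarrow> real) \<Rightarrow> real^'n^'n \<Rightarrow> bool" where
  "crit_SO f R \<longleftrightarrow> R \<in> SOn \<and>
     (\<forall>\<gamma> :: real \<Rightarrow> real^'n^'n. (\<forall>t. \<gamma> t \<in> SOn) \<and> \<gamma> 0 = R \<and> \<gamma> differentiable (at 0)
        \<longrightarrow> ((f \<circ> \<gamma>) has_real_derivative 0) (at 0))"

end

theory Submission
  imports Defs
begin

lemma mm_rdistrib: "((A::real^'n^'n) + B) ** C = A ** C + B ** C"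
  by (vector matrix_matrix_mult_def sum.distrib[symmetric] field_simps)

lemma bilinear_mm: "bilinear (\<lambda>(A::real^'n^'n) B. A ** B)"
  unfolding bilinear_def
  by (auto intro!: linearI simp: matrix_add_ldistrib mm_rdistrib scalar_matrix_assoc matrix_scalar_ac)

lemma bb_mm: "bounded_bilinear (\<lambda>(A::real^'n^'n) B. A ** B)"
  using bilinear_mm bilinear_conv_bounded_bilinear by blast

lemma bl_transpose: "bounded_linear (transpose :: real^'n^'n \<Rightarrow> real^'n^'n)"
  unfolding linear_conv_bounded_linear[symmetric]
  by (auto intro!: linearI simp: transpose_def vec_eq_iff)

lemma inner_trace: "(X::real^'n^'n) \<bullet> Y = trace (transpose X ** Y)"
  by (simp add: inner_vec_def trace_def matrix_matrix_mult_def transpose_def, rule sum.swap)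

lemma frob2_inner: "frob2 Y = Y \<bullet> Y"
  by (simp add: frob2_def inner_trace)

lemma inner_transpose: "transpose (X::real^'n^'n) \<bullet> transpose Y = X \<bullet> Y"
  unfolding inner_vec_def transpose_def by (simp, rule sum.swap)

lemma trace_transpose: "trace (transpose (X::real^'n^'n)) = trace X"
  by (simp add: trace_def transpose_def)


lemma transpose_add: "transpose ((A::real^'n^'n) + B) = transpose A + transpose B"
  by (simp add: transpose_def vec_eq_iff)
lemma transpose_diff: "transpose ((A::real^'n^'n) - B) = transpose A - transpose B"
  by (simp add: transpose_def vec_eq_iff)
lemma transpose_neg: "transpose (- (A::real^'n^'n)) = - transpose A"
  by (simp add: transpose_def vec_eq_iff)

lemma msym_T: "transpose (msym X) = msym X"
  by (simp add: msym_def transpose_scalar transpose_add add.commute)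
lemma mskew_T: "transpose (mskew X) = - mskew X"
  by (simp add: mskew_def transpose_scalar transpose_diff) (metis minus_diff_eq scaleR_minus_right)

lemma inner_sym_eq: "transpose S = S \<Longrightarrow> S \<bullet> msym (Y::real^'n^'n) = S \<bullet> Y"
  using inner_transpose[of S Y]
  by (simp add: msym_def inner_add_right)

lemma inner_skew_eq: "transpose S = - S \<Longrightarrow> S \<bullet> mskew (Y::real^'n^'n) = S \<bullet> Y"
  using inner_transpose[of S Y]
  by (simp add: mskew_def inner_diff_right)

lemma bl_rmul: "bounded_linear (\<lambda>X::real^'n^'n. X ** (F::real^'n^'n))"
  using bounded_bilinear.bounded_linear_left[OF bb_mm] .
lemma bl_lmul: "bounded_linear (\<lambda>X::real^'n^'n. (F::real^'n^'n) ** X)"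
  using bounded_bilinear.bounded_linear_right[OF bb_mm] .

lemma Wt_deriv:
  fixes \<gamma> :: "real \<Rightarrow> real^'n^'n"
  assumes g: "(\<gamma> has_derivative (\<lambda>h. h *\<^sub>R V)) (at 0)"
  shows "((\<lambda>t. Wt mu muc F (\<gamma> t)) has_derivative
     (\<lambda>h. h * (2 * (V \<bullet> (F ** transpose (mu *\<^sub>R msym (transpose (\<gamma> 0) ** F - mat 1)
        + muc *\<^sub>R mskew (transpose (\<gamma> 0) ** F - mat 1))))))) (at 0)"
proof -
  define Y where "Y = transpose V ** F"
  define X0 where "X0 = transpose (\<gamma> 0) ** F - mat 1"
  have d1: "((\<lambda>t. transpose (\<gamma> t)) has_derivative (\<lambda>h. transpose (h *\<^sub>R V))) (at 0)"
    using bounded_linear.has_derivative[OF bl_transpose g] .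
  have d2: "((\<lambda>t. transpose (\<gamma> t) ** F - mat 1) has_derivative (\<lambda>h. h *\<^sub>R Y)) (at 0)"
    using has_derivative_diff[OF bounded_linear.has_derivative[OF bl_rmul d1] has_derivative_const[of "mat 1"]]
    by (simp add: Y_def transpose_scalar scalar_matrix_assoc)
  have d3: "((\<lambda>t. msym (transpose (\<gamma> t) ** F - mat 1)) has_derivative (\<lambda>h. h *\<^sub>R msym Y)) (at 0)"
    unfolding msym_def
    using has_derivative_scaleR_right[OF has_derivative_add[OF d2 bounded_linear.has_derivative[OF bl_transpose d2]], of "1/2"]
    by (simp add: transpose_scalar scaleR_add_right)
  have d4: "((\<lambda>t. mskew (transpose (\<gamma> t) ** F - mat 1)) has_derivative (\<lambda>h. h *\<^sub>R mskew Y)) (at 0)"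
    unfolding mskew_def
    using has_derivative_scaleR_right[OF has_derivative_diff[OF d2 bounded_linear.has_derivative[OF bl_transpose d2]], of "1/2"]
    by (simp add: transpose_scalar scaleR_diff_right)
  note d5 = has_derivative_add[OF has_derivative_mult_right[OF has_derivative_inner[OF d3 d3], of mu]
       has_derivative_mult_right[OF has_derivative_inner[OF d4 d4], of muc]]
  define S where "S = msym X0"
  define K where "K = mskew X0"
  have key: "V \<bullet> (F ** transpose (mu *\<^sub>R S + muc *\<^sub>R K)) = mu * (S \<bullet> msym Y) + muc * (K \<bullet> mskew Y)"
  proof -
    have "V \<bullet> (F ** transpose (mu *\<^sub>R S + muc *\<^sub>R K)) = (mu *\<^sub>R S + muc *\<^sub>R K) \<bullet> Y"
      unfolding inner_trace Y_def
      by (metis matrix_mul_assoc trace_mul_sym transpose_transpose)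
    also have "\<dots> = mu * (S \<bullet> Y) + muc * (K \<bullet> Y)"
      by (simp add: inner_add_left)
    also have "\<dots> = mu * (S \<bullet> msym Y) + muc * (K \<bullet> mskew Y)"
      using inner_sym_eq[OF msym_T[of X0]] inner_skew_eq[OF mskew_T[of X0]]
      by (simp add: S_def K_def)
    finally show ?thesis .
  qed
  show ?thesis
    unfolding Wt_def frob2_inner
    apply (rule has_derivative_eq_rhs[OF d5])
    apply (rule ext)
    using key unfolding S_def K_def X0_def
    by (simp add: inner_commute algebra_simps)
qed

definition Em :: "'n \<Rightarrow> 'n \<Rightarrow> real^'n^'n" where
  "Em p q = (\<chi> a b. if a = p \<and> b = q then 1 else 0)"

lemma Em_mult: "Em p q ** Em r s = (if q = r then Em p s else 0)"
proof -
  have "(\<Sum>k\<in>UNIV. (if a = p \<and> k = q then 1 else 0) * (if k = r \<and> b = s then 1 else 0))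
        = (if a=p \<and> q=r \<and> b=s then 1 else (0::real))" for a b
  proof -
    have "(\<Sum>k\<in>UNIV. (if a = p \<and> k = q then 1 else 0) * (if k = r \<and> b = s then 1 else (0::real)))
       = (\<Sum>k\<in>UNIV. if k = q then (if a=p \<and> q=r \<and> b=s then 1 else 0) else 0)"
      by (rule sum.cong) auto
    also have "\<dots> = (if a=p \<and> q=r \<and> b=s then 1 else 0)" by simp
    finally show ?thesis .
  qed
  then show ?thesis
    by (auto simp: Em_def matrix_matrix_mult_def vec_eq_iff)
qed

lemma Em_T: "transpose (Em p q) = Em q p"
  by (auto simp: Em_def transpose_def vec_eq_iff)

lemma Em_inner: "Em p q \<bullet> (S::real^'n^'n) = S$p$q"
proof -
  have "(\<Sum>a\<in>UNIV. \<Sum>b\<in>UNIV. (if a = p \<and> b = q then 1 else 0) * S$a$b) =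
        (\<Sum>a\<in>UNIV. if a = p then S$p$q else 0)"
  proof (rule sum.cong)
    fix a :: 'n
    have "(\<Sum>b\<in>UNIV. (if a = p \<and> b = q then 1 else 0) * S$a$b) = (\<Sum>b\<in>UNIV. if b = q then (if a = p then S$a$q else 0) else 0)"
      by (rule sum.cong) auto
    then show "(\<Sum>b\<in>UNIV. (if a = p \<and> b = q then 1 else 0) * S$a$b) = (if a = p then S$p$q else 0)"
      by simp
  qed simp
  then show ?thesis by (simp add: Em_def inner_vec_def)
qed

definition Dm :: "'n \<Rightarrow> 'n \<Rightarrow> real^'n^'n" where
  "Dm i j = Em i i + Em j j"
definition Km :: "'n \<Rightarrow> 'n \<Rightarrow> real^'n^'n" where
  "Km i j = Em i j - Em j i"

lemma mm_rdiff: "((A::real^'n^'n) - B) ** C = A ** C - B ** C"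
  by (vector matrix_matrix_mult_def sum_subtractf[symmetric] field_simps)
lemma mm_ldiff: "(C::real^'n^'n) ** (A - B) = C ** A - C ** B"
  by (vector matrix_matrix_mult_def sum_subtractf[symmetric] field_simps)

lemmas Esimps = Em_mult Em_T mm_rdistrib matrix_add_ldistrib mm_rdiff mm_ldiff transpose_add transpose_diff

lemma Dm_T: "transpose (Dm i j) = Dm i j"
  by (simp add: Dm_def Esimps)
lemma Km_T: "transpose (Km i j) = - Km i j"
  by (simp add: Km_def Esimps)
lemma DD: "i \<noteq> j \<Longrightarrow> Dm i j ** Dm i j = Dm i j"
  by (simp add: Dm_def Esimps)
lemma KK: "i \<noteq> j \<Longrightarrow> Km i j ** Km i j = - Dm i j"
  by (simp add: Dm_def Km_def Esimps)
lemma DK: "i \<noteq> j \<Longrightarrow> Dm i j ** Km i j = Km i j"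
  by (simp add: Dm_def Km_def Esimps)
lemma KD: "i \<noteq> j \<Longrightarrow> Km i j ** Dm i j = Km i j"
  by (simp add: Dm_def Km_def Esimps)
lemma Km_inner: "Km i j \<bullet> (S::real^'n^'n) = S$i$j - S$j$i"
  by (simp add: Km_def inner_diff_left Em_inner)

definition Pl :: "'n \<Rightarrow> 'n \<Rightarrow> real \<Rightarrow> real^'n^'n" where
  "Pl i j t = mat 1 + (cos t - 1) *\<^sub>R Dm i j + sin t *\<^sub>R Km i j"

lemma Pl_alg: "i \<noteq> j \<Longrightarrow> (mat 1 + c *\<^sub>R Dm i j - s *\<^sub>R Km i j) ** (mat 1 + c *\<^sub>R Dm i j + s *\<^sub>R Km i j)
   = mat 1 + (2*c + c * c + s * s) *\<^sub>R Dm i j"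
  by (simp add: mm_rdistrib matrix_add_ldistrib mm_rdiff mm_ldiff
     matrix_scalar_ac scalar_matrix_assoc[symmetric] DD KK DK KD)
     (simp add: vec_eq_iff algebra_simps)

lemma Pl_orth: "i \<noteq> j \<Longrightarrow> transpose (Pl i j t) ** Pl i j t = mat 1"
proof -
  assume ij: "i \<noteq> j"
  have "transpose (Pl i j t) = mat 1 + (cos t - 1) *\<^sub>R Dm i j - sin t *\<^sub>R Km i j"
    by (simp add: Pl_def transpose_add transpose_scalar Dm_T Km_T)
  then have "transpose (Pl i j t) ** Pl i j t = mat 1 + (2*(cos t - 1) + (cos t - 1)*(cos t - 1) + sin t * sin t) *\<^sub>R Dm i j"
    using Pl_alg[OF ij] by (simp add: Pl_def)
  also have "2*(cos t - 1) + (cos t - 1)*(cos t - 1) + sin t * sin t = 0"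
    using sin_cos_squared_add[of t] by (simp add: algebra_simps power2_eq_square)
  finally show ?thesis by simp
qed

lemma Pl_0: "Pl i j 0 = mat 1"
  by (simp add: Pl_def)

lemma Pl_deriv: "(Pl i j has_derivative (\<lambda>h. h *\<^sub>R Km i j)) (at 0)"
proof -
  have c0: "((\<lambda>t. cos t - 1) has_real_derivative 0) (at 0)"
    by (auto intro!: derivative_eq_intros)
  note c = c0[unfolded has_field_derivative_def]
  have s: "(sin has_derivative (*) 1) (at (0::real))"
    using DERIV_sin[of "0::real"] unfolding has_field_derivative_def by simp
  have "(Pl i j has_derivative (\<lambda>h. 0 + (0 * h) *\<^sub>R Dm i j + (1 * h) *\<^sub>R Km i j)) (at 0)"
    unfolding Pl_def
    by (intro has_derivative_add has_derivative_const has_derivative_scaleR_left c s)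
  then show ?thesis by simp
qed

lemma orth_deriv:
  fixes \<gamma> :: "real \<Rightarrow> real^'n^'n"
  assumes g: "(\<gamma> has_derivative (\<lambda>h. h *\<^sub>R V)) (at 0)"
    and o: "\<And>t. transpose (\<gamma> t) ** \<gamma> t = mat 1"
  shows "transpose V ** \<gamma> 0 + transpose (\<gamma> 0) ** V = 0"
proof -
  have d1: "((\<lambda>t. transpose (\<gamma> t)) has_derivative (\<lambda>h. transpose (h *\<^sub>R V))) (at 0)"
    using bounded_linear.has_derivative[OF bl_transpose g] .
  have A: "((\<lambda>t. transpose (\<gamma> t) ** \<gamma> t) has_derivative
      (\<lambda>h. transpose (\<gamma> 0) ** (h *\<^sub>R V) + transpose (h *\<^sub>R V) ** \<gamma> 0)) (at 0)"
    using bounded_bilinear.FDERIV[OF bb_mm d1 g] by simp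
  have B: "((\<lambda>t. transpose (\<gamma> t) ** \<gamma> t) has_derivative (\<lambda>h. 0)) (at 0)"
    using o by simp
  have "(\<lambda>h. transpose (\<gamma> 0) ** (h *\<^sub>R V) + transpose (h *\<^sub>R V) ** \<gamma> 0) = (\<lambda>h. 0)"
    using has_derivative_unique[OF A B] .
  then have "transpose (\<gamma> 0) ** (1 *\<^sub>R V) + transpose (1 *\<^sub>R V) ** \<gamma> 0 = 0"
    by meson
  then show ?thesis by (simp add: add.commute)
qed

lemma inner_mult_left: "((R::real^'n^'n) ** (A::real^'n^'n)) \<bullet> P = A \<bullet> (transpose R ** P)"
  unfolding inner_trace by (simp add: matrix_transpose_mul matrix_mul_assoc)

lemma crit_char:
  fixes R P :: "real^'n^'n" and f :: "real^'n^'n \<Rightarrow> real"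
  assumes R: "R \<in> SOn"
   and D: "\<And>\<gamma> V. (\<gamma> has_derivative (\<lambda>h. h *\<^sub>R V)) (at 0) \<Longrightarrow> \<gamma> 0 = R \<Longrightarrow>
            ((f \<circ> \<gamma>) has_derivative (\<lambda>h. h * (V \<bullet> P))) (at 0)"
  shows "crit_SO f R \<longleftrightarrow> transpose (transpose R ** P) = transpose R ** P"
proof
  define S where "S = transpose R ** P"
  have Ro: "orthogonal_matrix R" using R by (simp add: SOn_def)
  assume c: "crit_SO f R"
  have "S$i$j = S$j$i" for i j
  proof (cases "i = j")
    case True then show ?thesis by simp
  next
    case False
    define \<gamma> where "\<gamma> t = R ** (Pl i j t ** Pl i j t)" for t
    have inSO: "\<gamma> t \<in> SOn" for t
    proof -
      have oP: "orthogonal_matrix (Pl i j t)"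
        using Pl_orth[OF False] orthogonal_matrix by blast
      have "orthogonal_matrix (\<gamma> t)"
        unfolding \<gamma>_def by (intro orthogonal_matrix_mul Ro oP)
      moreover have "det (\<gamma> t) = 1"
        using det_orthogonal_matrix[OF oP] R
        by (auto simp: \<gamma>_def det_mul SOn_def)
      ultimately show ?thesis by (simp add: SOn_def)
    qed
    have g0: "\<gamma> 0 = R" by (simp add: \<gamma>_def Pl_0)
    have gP: "((\<lambda>t. Pl i j t ** Pl i j t) has_derivative (\<lambda>h. Pl i j 0 ** (h *\<^sub>R Km i j) + (h *\<^sub>R Km i j) ** Pl i j 0)) (at 0)"
      using bounded_bilinear.FDERIV[OF bb_mm Pl_deriv Pl_deriv] .
    have gd: "(\<gamma> has_derivative (\<lambda>h. h *\<^sub>R (2 *\<^sub>R (R ** Km i j)))) (at 0)"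
      unfolding \<gamma>_def
      apply (rule has_derivative_eq_rhs[OF bounded_linear.has_derivative[OF bl_lmul gP]])
      apply (rule ext)
      subgoal for h
      proof -
        have "h *\<^sub>R Km i j + h *\<^sub>R Km i j = (2*h) *\<^sub>R Km i j"
          by (simp only: scaleR_add_left[symmetric] mult_2)
        then show ?thesis
          by (simp only: Pl_0 matrix_mul_lid matrix_mul_rid matrix_scalar_ac scalar_matrix_assoc[symmetric] scaleR_scaleR mult.commute)
      qed
      done
    then have diff: "\<gamma> differentiable (at 0)" unfolding differentiable_def by blast
    have "((f \<circ> \<gamma>) has_real_derivative 0) (at 0)"
      using c inSO g0 diff unfolding crit_SO_def by blast
    then have d0: "((f \<circ> \<gamma>) has_derivative (*) 0) (at 0)"
      unfolding has_field_derivative_def .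
    have d1: "((f \<circ> \<gamma>) has_derivative (\<lambda>h. h * ((2 *\<^sub>R (R ** Km i j)) \<bullet> P))) (at 0)"
      using D[OF gd g0] .
    have "(*) (0::real) = (\<lambda>h. h * ((2 *\<^sub>R (R ** Km i j)) \<bullet> P))"
      using has_derivative_unique[OF d0 d1] .
    then have "(*) (0::real) 1 = 1 * ((2 *\<^sub>R (R ** Km i j)) \<bullet> P)" by meson
    then have "(2 *\<^sub>R (R ** Km i j)) \<bullet> P = 0" by simp
    then have "Km i j \<bullet> S = 0" by (simp add: inner_mult_left S_def)
    then show ?thesis by (simp add: Km_inner)
  qed
  then show "transpose (transpose R ** P) = transpose R ** P"
    unfolding S_def[symmetric] by (simp add: vec_eq_iff transpose_def)
next
  define S where "S = transpose R ** P"
  have Ro: "orthogonal_matrix R" using R by (simp add: SOn_def)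
  assume sym: "transpose (transpose R ** P) = transpose R ** P"
  show "crit_SO f R"
    unfolding crit_SO_def
  proof (intro conjI allI impI R)
    fix \<gamma> :: "real \<Rightarrow> real^'n^'n"
    assume H: "(\<forall>t. \<gamma> t \<in> SOn) \<and> \<gamma> 0 = R \<and> \<gamma> differentiable (at 0)"
    define V where "V = vector_derivative \<gamma> (at 0)"
    have g: "(\<gamma> has_derivative (\<lambda>h. h *\<^sub>R V)) (at 0)"
      using H vector_derivative_works unfolding V_def has_vector_derivative_def by blast
    have o: "transpose (\<gamma> t) ** \<gamma> t = mat 1" for t
      using H by (simp add: SOn_def orthogonal_matrix)
    have od: "transpose V ** R + transpose R ** V = 0"
      using orth_deriv[OF g o] H by simp
    define B where "B = transpose R ** V"
    have BT: "transpose B = - B"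
      using od by (simp add: B_def matrix_transpose_mul eq_neg_iff_add_eq_0)
    have "V \<bullet> P = (R ** B) \<bullet> P"
      using Ro by (simp add: B_def matrix_mul_assoc orthogonal_matrix_def)
    also have "\<dots> = B \<bullet> S" by (simp add: inner_mult_left S_def)
    finally have VP: "V \<bullet> P = B \<bullet> S" .
    have "B \<bullet> S = transpose B \<bullet> transpose S" by (simp add: inner_transpose)
    also have "\<dots> = - (B \<bullet> S)" using BT sym by (simp add: S_def)
    finally have "B \<bullet> S = 0" by simp
    then have X: "((f \<circ> \<gamma>) has_derivative (\<lambda>h. h * 0)) (at 0)"
      using D[OF g] H VP by auto
    show "((f \<circ> \<gamma>) has_real_derivative 0) (at 0)"
      unfolding has_field_derivative_def using X by (rule has_derivative_eq_rhs) auto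
  qed
qed

lemma crit_Wt:
  fixes R F :: "real^'n^'n"
  assumes R: "R \<in> SOn"
  shows "crit_SO (Wt mu muc F) R \<longleftrightarrow>
    transpose ((transpose R ** F) ** transpose (mu *\<^sub>R msym (transpose R ** F - mat 1) + muc *\<^sub>R mskew (transpose R ** F - mat 1)))
    = (transpose R ** F) ** transpose (mu *\<^sub>R msym (transpose R ** F - mat 1) + muc *\<^sub>R mskew (transpose R ** F - mat 1))"
proof -
  define N where "N = mu *\<^sub>R msym (transpose R ** F - mat 1) + muc *\<^sub>R mskew (transpose R ** F - mat 1)"
  define P where "P = 2 *\<^sub>R (F ** transpose N)"
  have "crit_SO (Wt mu muc F) R \<longleftrightarrow> transpose (transpose R ** P) = transpose R ** P"
  proof (rule crit_char[OF R])
    fix \<gamma> :: "real \<Rightarrow> real^'n^'n" and V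
    assume g: "(\<gamma> has_derivative (\<lambda>h. h *\<^sub>R V)) (at 0)" and g0: "\<gamma> 0 = R"
    show "((Wt mu muc F \<circ> \<gamma>) has_derivative (\<lambda>h. h * (V \<bullet> P))) (at 0)"
      using Wt_deriv[OF g, of mu muc F] g0 unfolding o_def P_def N_def
      by (simp add: inner_scaleR_right)
  qed
  also have "transpose R ** P = 2 *\<^sub>R ((transpose R ** F) ** transpose N)"
    by (simp add: P_def matrix_scalar_ac scalar_matrix_assoc[symmetric] matrix_mul_assoc)
  finally show ?thesis
    by (simp add: transpose_scalar N_def)
qed

lemma msym_diff: "msym (X - Y) = msym X - msym (Y::real^'n^'n)"
  by (simp add: msym_def transpose_diff algebra_simps)
lemma mskew_diff: "mskew (X - Y) = mskew X - mskew (Y::real^'n^'n)"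
  by (simp add: mskew_def transpose_diff algebra_simps)
lemma msym_scale: "msym (c *\<^sub>R X) = c *\<^sub>R msym (X::real^'n^'n)"
  by (simp add: msym_def transpose_scalar algebra_simps)
lemma msym_I: "msym (mat 1 :: real^'n^'n) = mat 1"
  by (simp add: msym_def scaleR_2[symmetric])
lemma mskew_I: "mskew (mat 1 :: real^'n^'n) = 0"
  by (simp add: mskew_def)
lemma msym_mskew: "msym X + mskew X = (X::real^'n^'n)"
  by (simp add: msym_def mskew_def scaleR_add_right[symmetric] scaleR_diff_right[symmetric])

lemma orth_simps:
  assumes "orthogonal_matrix (R::real^'n^'n)"
  shows "R ** transpose R = mat 1" "transpose R ** R = mat 1"
    "(A ** R) ** transpose R = A" "(A ** transpose R) ** R = A"
  using assms by (auto simp: orthogonal_matrix_def matrix_mul_assoc[symmetric])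

lemma conj_iff:
  assumes o: "orthogonal_matrix (R::real^'n^'n)"
  shows "Z = W \<longleftrightarrow> (R ** Z) ** transpose R = (R ** W) ** transpose R"
proof
  assume "(R ** Z) ** transpose R = (R ** W) ** transpose R"
  then have "transpose R ** ((R ** Z) ** transpose R) ** R = transpose R ** ((R ** W) ** transpose R) ** R"
    by simp
  then show "Z = W" by (simp add: orth_simps[OF o] matrix_mul_assoc)
qed simp

lemma part_i:
  fixes R F :: "real^'n^'n"
  assumes R: "R \<in> SOn" and mu: "mu > 0"
  shows "crit_SO (Wt mu mu F) R \<longleftrightarrow> F ** transpose R = R ** transpose F"
proof -
  have o: "orthogonal_matrix R" using R by (simp add: SOn_def)
  define X where "X = transpose R ** F"
  have N: "mu *\<^sub>R msym (X - mat 1) + mu *\<^sub>R mskew (X - mat 1) = mu *\<^sub>R (X - mat 1)"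
    by (simp add: scaleR_add_right[symmetric] msym_mskew)
  have Q: "X ** transpose (mu *\<^sub>R (X - mat 1)) = mu *\<^sub>R (X ** transpose X - X)"
    by (simp add: transpose_scalar transpose_diff matrix_scalar_ac scalar_matrix_assoc[symmetric] mm_ldiff scaleR_diff_right)
  have QT: "transpose (mu *\<^sub>R (X ** transpose X - X)) = mu *\<^sub>R (X ** transpose X - transpose X)"
    by (simp add: transpose_scalar transpose_diff matrix_transpose_mul)
  have "crit_SO (Wt mu mu F) R \<longleftrightarrow> mu *\<^sub>R (X ** transpose X - transpose X) = mu *\<^sub>R (X ** transpose X - X)"
    using crit_Wt[OF R, of mu mu F] unfolding X_def[symmetric] N Q QT .
  also have "\<dots> \<longleftrightarrow> transpose X = X" using mu by simp
  also have "\<dots> \<longleftrightarrow> (R ** transpose X) ** transpose R = (R ** X) ** transpose R"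
    using conj_iff[OF o] by blast
  also have "\<dots> \<longleftrightarrow> R ** transpose F = F ** transpose R"
    by (simp add: X_def matrix_transpose_mul matrix_mul_assoc orth_simps[OF o])
  finally show ?thesis by auto
qed

lemma crit_affine:
  assumes fg: "\<And>X. X \<in> SOn \<Longrightarrow> f X = a * g X + b" and a: "a \<noteq> 0"
  shows "crit_SO f R \<longleftrightarrow> crit_SO g R"
  unfolding crit_SO_def
proof (intro conj_cong refl all_cong imp_cong)
  fix \<gamma> :: "real \<Rightarrow> real^'a^'a"
  assume H: "(\<forall>t. \<gamma> t \<in> SOn) \<and> \<gamma> 0 = R \<and> \<gamma> differentiable at 0"
  have eq1: "f \<circ> \<gamma> = (\<lambda>t. a * (g \<circ> \<gamma>) t + b)" using H by (auto simp: o_def fg)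
  have eq2: "g \<circ> \<gamma> = (\<lambda>t. (1/a) * ((f \<circ> \<gamma>) t - b))" using H a by (auto simp: o_def fg field_simps)
  show "((f \<circ> \<gamma>) has_real_derivative 0) (at 0) \<longleftrightarrow> ((g \<circ> \<gamma>) has_real_derivative 0) (at 0)"
  proof
    assume d: "((f \<circ> \<gamma>) has_real_derivative 0) (at 0)"
    have "((\<lambda>t. (1/a) * ((f \<circ> \<gamma>) t - b)) has_real_derivative (1/a) * (0 - 0)) (at 0)"
      by (intro DERIV_cmult DERIV_diff d DERIV_const)
    then show "((g \<circ> \<gamma>) has_real_derivative 0) (at 0)" by (simp add: eq2)
  next
    assume d: "((g \<circ> \<gamma>) has_real_derivative 0) (at 0)"
    have "((\<lambda>t. a * (g \<circ> \<gamma>) t + b) has_real_derivative a * 0 + 0) (at 0)"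
      by (intro DERIV_cmult DERIV_add d DERIV_const)
    then show "((f \<circ> \<gamma>) has_real_derivative 0) (at 0)" by (simp add: eq1)
  qed
qed

lemma sym_skew_orth: "msym X \<bullet> mskew (X::real^'n^'n) = 0"
  using inner_transpose[of "msym X" "mskew X"] by (simp add: msym_T mskew_T)

lemma Wt_affine:
  fixes R F :: "real^'n^'n"
  assumes R: "R \<in> SOn" and mu: "mu > 0" and ne: "mu \<noteq> muc"
  shows "Wt mu muc F R = (mu^2/(mu-muc)) * Wt 1 0 (Fhat mu muc F) R
     + (mu * (mat 1 \<bullet> (mat 1::real^'n^'n)) + muc * (F \<bullet> F) - (mu^2/(mu-muc)) * (mat 1 \<bullet> (mat 1::real^'n^'n)))"
proof -
  have o: "orthogonal_matrix R" using R by (simp add: SOn_def)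
  define X where "X = transpose R ** F"
  define k where "k = (mu - muc) / mu"
  define A where "A = msym X"
  define B where "B = mskew X"
  define I where "I = (mat 1 :: real^'n^'n)"
  have G: "transpose R ** Fhat mu muc F = k *\<^sub>R X"
    by (simp add: Fhat_def k_def X_def matrix_scalar_ac scalar_matrix_assoc[symmetric])
  have W1: "Wt mu muc F R = mu * ((A - I) \<bullet> (A - I)) + muc * (B \<bullet> B)"
    by (simp add: Wt_def frob2_inner msym_diff mskew_diff msym_I mskew_I A_def B_def I_def X_def)
  have W2: "Wt 1 0 (Fhat mu muc F) R = (k *\<^sub>R A - I) \<bullet> (k *\<^sub>R A - I)"
    by (simp add: Wt_def frob2_inner G msym_diff msym_I msym_scale A_def I_def)
  have XX: "X \<bullet> X = F \<bullet> F"
    unfolding inner_trace X_def by (simp add: matrix_transpose_mul matrix_mul_assoc orth_simps[OF o])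
  have AB: "A \<bullet> B = 0" by (simp add: A_def B_def sym_skew_orth)
  have XAB: "X = A + B" by (simp add: A_def B_def msym_mskew)
  have BB: "B \<bullet> B = F \<bullet> F - A \<bullet> A"
    using XX AB unfolding XAB by (simp add: inner_add_left inner_add_right inner_commute)
  have e1: "(A - I) \<bullet> (A - I) = A \<bullet> A - 2 * (A \<bullet> I) + I \<bullet> I"
    by (simp add: inner_diff_left inner_diff_right inner_commute)
  have e2: "(k *\<^sub>R A - I) \<bullet> (k *\<^sub>R A - I) = k^2 * (A \<bullet> A) - 2 * k * (A \<bullet> I) + I \<bullet> I"
    by (simp add: inner_diff_left inner_diff_right inner_commute power2_eq_square)
  have mm: "mu - muc \<noteq> 0" using ne by simp
  define c where "c = mu^2/(mu-muc)"
  have h1: "c * k^2 = mu - muc" using mu mm by (simp add: c_def k_def field_simps power2_eq_square)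
  have h2: "c * (2*k) = 2*mu" using mu mm by (simp add: c_def k_def field_simps power2_eq_square)
  have h3: "c * (k^2 * (A \<bullet> A) - 2 * k * (A \<bullet> I) + I \<bullet> I)
      = (c * k^2) * (A \<bullet> A) - (c * (2*k)) * (A \<bullet> I) + c * (I \<bullet> I)"
    by (simp add: algebra_simps)
  show ?thesis
    unfolding W1 W2 e1 e2 BB I_def[symmetric] c_def[symmetric] h3 h1 h2
    by (simp add: algebra_simps)
qed

lemma part_ii_b:
  fixes R G :: "real^'n^'n"
  assumes R: "R \<in> SOn"
  shows "crit_SO (Wt 1 0 G) R \<longleftrightarrow>
    G ** transpose R ** G ** transpose R - R ** transpose G ** R ** transpose G
      = 2 *\<^sub>R (G ** transpose R - R ** transpose G)"
proof -
  have o: "orthogonal_matrix R" using R by (simp add: SOn_def)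
  define Y where "Y = transpose R ** G"
  have N: "1 *\<^sub>R msym (Y - mat 1) + 0 *\<^sub>R mskew (Y - mat 1) = msym Y - mat 1"
    by (simp add: msym_diff msym_I)
  have Q: "Y ** transpose (msym Y - mat 1) = (1/2) *\<^sub>R (Y ** Y + Y ** transpose Y) - Y"
    by (simp only: transpose_diff msym_T transpose_mat)
       (simp add: msym_def mm_ldiff matrix_add_ldistrib matrix_scalar_ac
        scalar_matrix_assoc[symmetric] scaleR_add_right)
  have QT: "transpose ((1/2) *\<^sub>R (Y ** Y + Y ** transpose Y) - Y)
      = (1/2) *\<^sub>R (Y ** transpose Y + transpose Y ** transpose Y) - transpose Y"
    by (simp add: transpose_diff transpose_add transpose_scalar matrix_transpose_mul add.commute)
  have "crit_SO (Wt 1 0 G) R \<longleftrightarrow>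
      (1/2) *\<^sub>R (Y ** transpose Y + transpose Y ** transpose Y) - transpose Y
      = (1/2) *\<^sub>R (Y ** Y + Y ** transpose Y) - Y"
    using crit_Wt[OF R, of 1 0 G] unfolding Y_def[symmetric] N Q QT .
  also have "\<dots> \<longleftrightarrow> Y ** Y - transpose Y ** transpose Y = 2 *\<^sub>R (Y - transpose Y)"
    apply (simp add: vec_eq_iff)
    apply (intro iffI allI)
    subgoal for i j by (drule spec[of _ i], drule spec[of _ j]) (simp add: field_simps)
    subgoal for i j by (drule spec[of _ i], drule spec[of _ j]) (simp add: field_simps)
    done
  also have "\<dots> \<longleftrightarrow> (R ** (Y ** Y - transpose Y ** transpose Y)) ** transpose R
       = (R ** (2 *\<^sub>R (Y - transpose Y))) ** transpose R"
    using conj_iff[OF o] by blast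
  also have "\<dots> \<longleftrightarrow> G ** transpose R ** G ** transpose R - R ** transpose G ** R ** transpose G
      = 2 *\<^sub>R (G ** transpose R - R ** transpose G)"
    by (simp add: Y_def mm_ldiff mm_rdiff matrix_scalar_ac scalar_matrix_assoc[symmetric]
        matrix_transpose_mul matrix_mul_assoc orth_simps[OF o] scaleR_diff_right)
  finally show ?thesis .
qed

theorem mainTheorem4:
  fixes F :: "real^'n^'n" and mu muc :: real
  assumes "CARD('n) \<ge> 2" and "det F > 0" and "mu > 0" and "muc \<ge> 0"
  shows "(mu = muc \<longrightarrow>
            (\<forall>R \<in> SOn. crit_SO (Wt mu muc F) R \<longleftrightarrow> F ** transpose R = R ** transpose F))
       \<and> (mu \<noteq> muc \<longrightarrow>
            (\<forall>R \<in> SOn.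
               (crit_SO (Wt mu muc F) R \<longleftrightarrow> crit_SO (Wt 1 0 (Fhat mu muc F)) R)
             \<and> (crit_SO (Wt 1 0 (Fhat mu muc F)) R \<longleftrightarrow>
                  (let G = Fhat mu muc F in
                   G ** transpose R ** G ** transpose R - R ** transpose G ** R ** transpose G
                   = 2 *\<^sub>R (G ** transpose R - R ** transpose G)))))"
proof (intro conjI impI ballI)
  fix R :: "real^'n^'n"
  assume e: "mu = muc" and R: "R \<in> SOn"
  show "crit_SO (Wt mu muc F) R \<longleftrightarrow> F ** transpose R = R ** transpose F"
    using part_i[OF R \<open>mu > 0\<close>, of F] e by simp
next
  fix R :: "real^'n^'n"
  assume ne: "mu \<noteq> muc" and R: "R \<in> SOn"
  have a: "mu^2/(mu-muc) \<noteq> 0" using ne \<open>mu > 0\<close> by simp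
  show "crit_SO (Wt mu muc F) R \<longleftrightarrow> crit_SO (Wt 1 0 (Fhat mu muc F)) R"
    by (rule crit_affine[OF Wt_affine[OF _ \<open>mu > 0\<close> ne] a])
  show "crit_SO (Wt 1 0 (Fhat mu muc F)) R \<longleftrightarrow>
                  (let G = Fhat mu muc F in
                   G ** transpose R ** G ** transpose R - R ** transpose G ** R ** transpose G
                   = 2 *\<^sub>R (G ** transpose R - R ** transpose G))"
    unfolding Let_def by (rule part_ii_b[OF R])
qed

end
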